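(* Let $r$ be a positive integer such that $r+1$ is a prime that is not a Mersenne prime. Let $N$ be a positive integer and let $q_0,q_1,\ldots,q_N$ be distinct primes with $\operatorname{ord}_{q_n}(r+1)=2^n$ for $1\le n\le N$ and $\operatorname{ord}_{q_0}(r+1)=2^N$. Let $M=\prod_{i=0}^N q_i$, and let $A$ be the set of positive integers $x$ satisfying $x+r\equiv 0\pmod{q_0}$ and $(r+1)^{2^{n-1}}x+r\equiv 0\pmod{q_n}$ for all $n\in\{1,\ldots,N\}$. Let $B=\ell_1^{\beta_1}\cdots\ell_s^{\beta_s}$, where $\ell_1,\ldots,\ell_s$ are distinct primes, each greater than $r$ and congruent to $1$ modulo $M$, and $\beta_1,\ldots,\beta_s$ are positive integers. Let $p>M$ be a prime in $A$ such that $(r+1)^{\alpha}p\in G_r$ for all nonnegative integers $\alpha$, and such that $p-r$ has a prime divisor $P$ with $P\nmid (r+1)B$. Then $(r+1)^{\alpha}Bp\in G_r$ for all nonnegative integers $\alpha$.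
   Context: For a positive integer $r$, the $r$-th Schemmel totient function $S_r:\mathbb{N}\to\mathbb{N}_0$ is the multiplicative arithmetic function (so $S_r(1)=1$ and $S_r(ab)=S_r(a)S_r(b)$ for coprime $a,b$) defined on prime powers by $S_r(p^{\alpha})=0$ if $p\le r$ and $S_r(p^\alpha)=p^{\alpha-1}(p-r)$ if $p>r$, for all primes $p$ and positive integers $\alpha$. $G_r$ denotes the set of positive integers not in the range of $S_r$. $\operatorname{ord}_q(a)$ denotes the multiplicative order of $a$ modulo the prime $q$. *)

theory Defs
  imports "HOL-Number_Theory.Number_Theory"
begin

text \<open>The r-th Schemmel totient: multiplicative, with value 0 on p^a for p \<le> r
  and p^(a-1)(p-r) for p > r. (Value at 0 is irrelevant; only positive arguments are used.)\<close>
definition schemmel :: "nat \<Rightarrow> nat \<Rightarrow> nat" where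
  "schemmel r n = (\<Prod>p\<in>prime_factors n.
      if p \<le> r then 0 else p ^ (multiplicity p n - 1) * (p - r))"

definition G :: "nat \<Rightarrow> nat set" where
  "G r = {m. m > 0 \<and> \<not> (\<exists>n>0. schemmel r n = m)}"

definition mersenne_prime :: "nat \<Rightarrow> bool" where
  "mersenne_prime m \<longleftrightarrow> prime m \<and> (\<exists>k. m = 2 ^ k - 1)"

end

theory Submission
  imports Defs
begin

lemma cover_lemma:
  fixes r N p k :: nat and q :: "nat \<Rightarrow> nat"
  assumes q_ord: "\<forall>n\<in>{1..N}. ord (q n) (r + 1) = 2 ^ n"
    and q0_ord: "ord (q 0) (r + 1) = 2 ^ N"
    and h0: "[p + r = 0] (mod q 0)"
    and hn: "\<forall>n\<in>{1..N}. [(r + 1) ^ (2 ^ (n - 1)) * p + r = 0] (mod q n)"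
  shows "\<exists>j\<in>{0..N}. [(r + 1) ^ k * p + r = 0] (mod q j)"
proof (cases "2 ^ N dvd k")
  case True
  then have "[(r+1) ^ k = 1] (mod q 0)" using q0_ord ord_divides[of "r+1" k "q 0"] by simp
  then have "[(r + 1) ^ k * p + r = 1 * p + r] (mod q 0)"
    by (intro cong_add cong_mult) auto
  then have "[(r + 1) ^ k * p + r = 0] (mod q 0)" using h0 cong_trans by auto
  then show ?thesis by auto
next
  case False
  then have "k \<noteq> 0" by (metis dvd_0_right)
  obtain y where ky: "k = 2 ^ multiplicity 2 k * y" "\<not> 2 dvd y"
    using multiplicity_decompose'[of k 2] \<open>k \<noteq> 0\<close> by auto
  define v where "v = multiplicity 2 k"
  have vN: "v < N"
  proof (rule ccontr)
    assume "\<not> v < N"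
    then have "(2::nat) ^ N dvd 2 ^ v" by (simp add: le_imp_power_dvd)
    then have "2 ^ N dvd k" using ky v_def by (metis dvd_mult2)
    with False show False by simp
  qed
  obtain t where yt: "y = 2 * t + 1" using ky(2) by (metis oddE)
  have kk: "k = 2 ^ v + 2 ^ (v+1) * t" using ky yt v_def by (simp add: algebra_simps)
  have n_in: "v + 1 \<in> {1..N}" using vN by auto
  have "ord (q (v+1)) (r+1) = 2^(v+1)" using q_ord n_in by blast
  then have "[(r+1) ^ (2^(v+1)) = 1] (mod q (v+1))" using ord_divides[of "r+1" "2^(v+1)" "q (v+1)"] by simp
  then have "[((r+1) ^ (2^(v+1))) ^ t = 1 ^ t] (mod q (v+1))" by (rule cong_pow)
  then have "[(r+1) ^ (2^v) * ((r+1) ^ (2^(v+1))) ^ t = (r+1) ^ (2^v) * 1] (mod q (v+1))"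
    by (intro cong_mult) auto
  then have "[(r+1) ^ k = (r+1) ^ (2^v)] (mod q (v+1))"
    by (simp add: kk power_add power_mult)
  then have "[(r + 1) ^ k * p + r = (r+1) ^ (2^v) * p + r] (mod q (v+1))"
    by (intro cong_add cong_mult) auto
  moreover have "[(r+1) ^ (2^v) * p + r = 0] (mod q (v+1))"
    using bspec[OF hn n_in] by simp
  ultimately have "[(r + 1) ^ k * p + r = 0] (mod q (v+1))" using cong_trans by blast
  then show ?thesis using n_in by auto
qed

lemma divB_lemma:
  fixes L :: "nat set" and \<beta> :: "nat \<Rightarrow> nat" and M d :: nat
  assumes L_fin: "finite L"
    and L_primes: "\<forall>l\<in>L. prime l \<and> [l = 1] (mod M)"
    and dB: "d dvd (\<Prod>l\<in>L. l ^ \<beta> l)"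
  shows "[d = 1] (mod M)"
proof -
  have Bpos: "(\<Prod>l\<in>L. l ^ \<beta> l) \<noteq> 0" using L_primes L_fin
    by (auto simp: prime_gt_0_nat)
  then have "d \<noteq> 0" using dB by auto
  have pf: "x \<in> L" if "x \<in> prime_factors d" for x
  proof -
    have xp: "prime x" "x dvd d" using that by auto
    then have "x dvd (\<Prod>l\<in>L. l ^ \<beta> l)" using dB xp(2) dvd_trans by blast
    then obtain l where "l \<in> L" "x dvd l ^ \<beta> l"
      using prime_dvd_prod_iff[OF L_fin xp(1)] by auto
    then have "x dvd l" using xp(1) prime_dvd_power by blast
    then have "x = l" using xp(1) L_primes \<open>l \<in> L\<close>
      by (metis primes_dvd_imp_eq)
    with \<open>l \<in> L\<close> show ?thesis by simp
  qed
  have "d = (\<Prod>x\<in>prime_factors d. x ^ multiplicity x d)"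
    using prod_prime_factors[OF \<open>d \<noteq> 0\<close>] by simp
  moreover have "[(\<Prod>x\<in>prime_factors d. x ^ multiplicity x d) = (\<Prod>x\<in>prime_factors d. 1)] (mod M)"
  proof (rule cong_prod)
    fix x assume "x \<in> prime_factors d"
    then have "[x = 1] (mod M)" using pf L_primes by auto
    then have "[x ^ multiplicity x d = 1 ^ multiplicity x d] (mod M)" by (rule cong_pow)
    then show "[x ^ multiplicity x d = 1] (mod M)" by simp
  qed
  ultimately show ?thesis by simp
qed

theorem theorem2p2:
  fixes r N :: nat and q :: "nat \<Rightarrow> nat" and L :: "nat set" and \<beta> :: "nat \<Rightarrow> nat"
    and p P M B :: nat and A :: "nat set"
  assumes r_pos: "r > 0"
    and r1_prime: "prime (r + 1)" and not_mersenne: "\<not> mersenne_prime (r + 1)"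
    and N_pos: "N > 0"
    and q_prime: "\<forall>i\<in>{0..N}. prime (q i)" and q_distinct: "inj_on q {0..N}"
    and q_ord: "\<forall>n\<in>{1..N}. ord (q n) (r + 1) = 2 ^ n"
    and q0_ord: "ord (q 0) (r + 1) = 2 ^ N"
    and M_def: "M = (\<Prod>i\<in>{0..N}. q i)"
    and A_def: "A = {x. x > 0 \<and> [x + r = 0] (mod q 0) \<and>
                   (\<forall>n\<in>{1..N}. [(r + 1) ^ (2 ^ (n - 1)) * x + r = 0] (mod q n))}"
    and L_fin: "finite L"
    and L_primes: "\<forall>l\<in>L. prime l \<and> l > r \<and> [l = 1] (mod M)"
    and \<beta>_pos: "\<forall>l\<in>L. \<beta> l > 0"
    and B_def: "B = (\<Prod>l\<in>L. l ^ \<beta> l)"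
    and p_prime: "prime p" and p_gt: "p > M" and p_A: "p \<in> A"
    and p_G: "\<forall>\<alpha>::nat. (r + 1) ^ \<alpha> * p \<in> G r"
    and P_prime: "prime P" and P_dvd: "int P dvd int p - int r"
    and P_ndvd: "\<not> P dvd (r + 1) * B"
  shows "\<forall>\<alpha>::nat. (r + 1) ^ \<alpha> * B * p \<in> G r"
proof
  fix \<alpha> :: nat
  define X where "X = (r + 1) ^ \<alpha> * B"
  have Bpos: "B > 0" using L_primes L_fin B_def by (auto simp: prime_gt_0_nat)
  have Mpos: "M > 0" using q_prime M_def by (auto simp: prime_gt_0_nat)
  have mpos: "X * p > 0" using Bpos p_prime X_def by (auto simp: prime_gt_0_nat)
  have h0: "[p + r = 0] (mod q 0)"
    and hn: "\<forall>n\<in>{1..N}. [(r + 1) ^ (2 ^ (n - 1)) * p + r = 0] (mod q n)"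
    using p_A A_def by auto
  define f where "f = (\<lambda>x. if x \<le> r then 0 else x ^ (multiplicity x n - 1) * (x - r))"
  have "\<not> (\<exists>n>0. schemmel r n = X * p)"
  proof
    assume "\<exists>n>0. schemmel r n = X * p"
    then obtain n where npos: "n > 0" and sn: "schemmel r n = X * p" by auto
    define g where "g = (\<lambda>x. if x \<le> r then 0 else x ^ (multiplicity x n - 1) * (x - r))"
    have sn': "(\<Prod>x\<in>prime_factors n. g x) = X * p" using sn by (simp add: schemmel_def g_def)
    have "p dvd (\<Prod>x\<in>prime_factors n. g x)" using sn' by simp
    then have "\<exists>x\<in>prime_factors n. p dvd g x"
      using prime_dvd_prod_iff[OF finite_set_mset p_prime] by blast
    then obtain x where xin: "x \<in> prime_factors n" and pg: "p dvd g x" by blast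
    have "g x dvd (\<Prod>x\<in>prime_factors n. g x)" using xin by (intro dvd_prodI) auto
    then have gdvd: "g x dvd X * p" using sn' by simp
    have "g x \<noteq> 0"
    proof
      assume "g x = 0"
      then have "X * p = 0" using gdvd by simp
      then show False using mpos by simp
    qed
    then have xr: "x > r" and gx: "g x = x ^ (multiplicity x n - 1) * (x - r)"
      using g_def by (auto split: if_splits)
    have xprime: "prime x" using xin by auto
    show False
    proof (cases "p dvd x ^ (multiplicity x n - 1)")
      case True
      then have "p dvd x" using p_prime prime_dvd_power by blast
      then have px: "p = x" using p_prime xprime by (metis primes_dvd_imp_eq)
      have "multiplicity x n - 1 \<noteq> 0"
        using True p_prime px by (auto simp: prime_nat_iff)
      then have "x dvd x ^ (multiplicity x n - 1)" by (simp add: dvd_power)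
      then have "p * (p - r) dvd g x" using gx px by (simp add: mult_dvd_mono)
      then have "p * (p - r) dvd X * p" using gdvd by (rule dvd_trans)
      then have "p * (p - r) dvd p * X" by (simp add: mult.commute)
      then have "(p - r) dvd X" using p_prime by (auto simp: prime_gt_0_nat)
      moreover have "P dvd p - r"
      proof -
        have "int (p - r) = int p - int r" using xr px by simp
        then show ?thesis using P_dvd by (metis int_dvd_int_iff)
      qed
      ultimately have "P dvd X" by (rule dvd_trans[rotated])
      then have "P dvd (r + 1) ^ \<alpha> \<or> P dvd B" using X_def P_prime prime_dvd_mult_iff by blast
      then have "P dvd (r+1) \<or> P dvd B" using P_prime prime_dvd_power by blast
      then have "P dvd (r+1) * B" by (metis dvd_mult dvd_mult2)
      with P_ndvd show False by simp
    next
      case False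
      then have "p dvd x - r" using pg gx p_prime prime_dvd_mult_iff by auto
      then obtain e where e: "x - r = p * e" by (auto elim: dvdE)
      have "x - r dvd g x" using gx by simp
      then have "x - r dvd X * p" using gdvd by (rule dvd_trans)
      then have "p * e dvd p * X" using e by (simp add: mult.commute)
      then have eX: "e dvd X" using p_prime by (auto simp: prime_gt_0_nat)
      have "e \<noteq> 0"
      proof
        assume "e = 0"
        then have "x - r = 0" using e by simp
        then show False using xr by simp
      qed
      obtain d where ed: "e = (r+1) ^ multiplicity (r+1) e * d" "\<not> (r+1) dvd d"
        using multiplicity_decompose'[of e "r+1"] \<open>e \<noteq> 0\<close> r_pos by auto
      define k where "k = multiplicity (r+1) e"
      have "coprime d ((r+1) ^ \<alpha>)"
      proof -
        have "coprime (r+1) d" using ed(2) r1_prime by (simp add: prime_imp_coprime)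
        then show ?thesis by (simp add: coprime_commute)
      qed
      moreover have "d dvd (r+1) ^ \<alpha> * B" using eX X_def ed(1)
        by (metis dvd_mult_right)
      ultimately have "d dvd B" using coprime_dvd_mult_right_iff by blast
      then have dM: "[d = 1] (mod M)" using divB_lemma[of L M d \<beta>] L_fin L_primes B_def by auto
      obtain j where jin: "j \<in> {0..N}" and jc: "[(r + 1) ^ k * p + r = 0] (mod q j)"
        using cover_lemma[OF q_ord q0_ord h0 hn] by blast
      have "q j dvd M" using M_def jin by (auto intro: dvd_prodI)
      then have "[d = 1] (mod q j)" using dM cong_dvd_modulus_nat by blast
      then have "[(r+1) ^ k * d * p + r = (r+1)^k * 1 * p + r] (mod q j)"
        by (intro cong_add cong_mult) auto
      then have "[(r+1) ^ k * d * p + r = 0] (mod q j)" using jc cong_trans by auto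
      moreover have "x = (r+1) ^ k * d * p + r"
      proof -
        have "x = p * e + r" using e xr by linarith
        then show ?thesis using ed(1) k_def by (simp add: mult.commute)
      qed
      ultimately have "q j dvd x" by (simp add: cong_0_iff)
      then have "q j = x" using xprime q_prime jin by (metis primes_dvd_imp_eq)
      moreover have "q j \<le> M" using \<open>q j dvd M\<close> Mpos by (simp add: dvd_imp_le)
      moreover have "x \<ge> p"
      proof -
        have "p \<le> p * e" using \<open>e \<noteq> 0\<close> by simp
        then show ?thesis using e xr by linarith
      qed
      ultimately show False using p_gt by simp
    qed
  qed
  then show "(r + 1) ^ \<alpha> * B * p \<in> G r" using mpos by (simp add: G_def X_def)
qed

end
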